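(* Let $G \leq \mathrm{Homeo}(\mathbb{S}^1)$ be a group whose action on $\mathbb{S}^1$ is minimal and not topologically free. Suppose that $G$ acts faithfully on a set $\Omega$ such that for every $\Delta \in \Omega^{\{2\}}$, the action of $G_\Delta$ on $\mathbb{S}^1$ is minimal. Then there exists $\omega \in \Omega$ such that the action of $G_\omega$ on $\mathbb{S}^1$ is not topologically free.
   Context: An action on $\mathbb{S}^1$ is minimal if every orbit is dense, and topologically free if the fixed point set of every non-trivial element has empty interior. $\Omega^{\{2\}}$ is the set of unordered pairs of elements of $\Omega$, $G_\Delta$ the pointwise stabilizer of $\Delta$, and $G_\omega$ the stabilizer of $\omega$. *)

theory Defs
  imports "HOL-Analysis.Analysis" "HOL-Algebra.Group_Action"
begin

definition S1 :: "complex set" where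
  "S1 = sphere 0 1"

text \<open>Homeo(S^1): homeomorphisms of S1, extended by the identity outside S1
  (so that equality of maps is equality on S1).\<close>
definition Homeo_S1 :: "(complex \<Rightarrow> complex) set" where
  "Homeo_S1 = {f. (\<exists>g. homeomorphism S1 S1 f g) \<and> (\<forall>x. x \<notin> S1 \<longrightarrow> f x = x)}"

definition homeo_group :: "(complex \<Rightarrow> complex) set \<Rightarrow> (complex \<Rightarrow> complex) monoid" where
  "homeo_group G = \<lparr>carrier = G, mult = (\<circ>), one = id\<rparr>"

definition homeo_subgroup :: "(complex \<Rightarrow> complex) set \<Rightarrow> bool" where
  "homeo_subgroup G \<longleftrightarrow> G \<subseteq> Homeo_S1 \<and> group (homeo_group G)"

definition minimal_action :: "(complex \<Rightarrow> complex) set \<Rightarrow> bool" where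
  "minimal_action H \<longleftrightarrow> (\<forall>x\<in>S1. S1 \<subseteq> closure {h x | h. h \<in> H})"

definition topologically_free :: "(complex \<Rightarrow> complex) set \<Rightarrow> bool" where
  "topologically_free H \<longleftrightarrow>
     (\<forall>h\<in>H. h \<noteq> id \<longrightarrow> (top_of_set S1) interior_of {x\<in>S1. h x = x} = {})"

definition pointwise_stabilizer :: "_ \<Rightarrow> ('a \<Rightarrow> 'b \<Rightarrow> 'b) \<Rightarrow> 'b set \<Rightarrow> 'a set" where
  "pointwise_stabilizer G \<phi> D = {g \<in> carrier G. \<forall>d\<in>D. \<phi> g d = d}"

end

theory Submission
  imports Defs
begin

lemma S1_conn: "connected_space (top_of_set S1)"
  using connected_sphere[of "0::complex" 1] connected_space_subtopology[of euclidean S1]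
  by (simp add: S1_def)

theorem lemma4p4:
  fixes G :: "(complex \<Rightarrow> complex) set"
    and \<Omega> :: "'b set"
    and \<phi> :: "(complex \<Rightarrow> complex) \<Rightarrow> 'b \<Rightarrow> 'b"
  assumes "homeo_subgroup G"
    and "minimal_action G"
    and "\<not> topologically_free G"
    and "faithful_action (homeo_group G) \<Omega> \<phi>"
    and "\<And>\<Delta>. \<Delta> \<subseteq> \<Omega> \<Longrightarrow> card \<Delta> = 2 \<Longrightarrow>
           minimal_action (pointwise_stabilizer (homeo_group G) \<phi> \<Delta>)"
  shows "\<exists>\<omega>\<in>\<Omega>. \<not> topologically_free (stabilizer (homeo_group G) \<phi> \<omega>)"
proof -
  let ?H = "homeo_group G"
  have grp: "group ?H" and GH: "G \<subseteq> Homeo_S1" using assms(1) by (auto simp: homeo_subgroup_def)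
  interpret group ?H by (rule grp)
  interpret fa: faithful_action ?H \<Omega> \<phi> by (rule assms(4))
  have car: "carrier ?H = G" by (simp add: homeo_group_def)
  have mul: "\<And>a b. a \<otimes>\<^bsub>?H\<^esub> b = a \<circ> b" by (simp add: homeo_group_def)
  have one: "\<one>\<^bsub>?H\<^esub> = id" by (simp add: homeo_group_def)
  have invr: "\<And>a z. a \<in> G \<Longrightarrow> a ((inv\<^bsub>?H\<^esub> a) z) = z"
  proof -
    fix a z assume "a \<in> G"
    then have "a \<otimes>\<^bsub>?H\<^esub> inv\<^bsub>?H\<^esub> a = \<one>\<^bsub>?H\<^esub>" using car by simp
    then show "a ((inv\<^bsub>?H\<^esub> a) z) = z" by (metis mul one comp_apply id_apply)
  qed
  have invl: "\<And>a z. a \<in> G \<Longrightarrow> (inv\<^bsub>?H\<^esub> a) (a z) = z"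
  proof -
    fix a z assume "a \<in> G"
    then have "inv\<^bsub>?H\<^esub> a \<otimes>\<^bsub>?H\<^esub> a = \<one>\<^bsub>?H\<^esub>" using car by simp
    then show "(inv\<^bsub>?H\<^esub> a) (a z) = z" by (metis mul one comp_apply id_apply)
  qed
  have invG: "\<And>a. a \<in> G \<Longrightarrow> inv\<^bsub>?H\<^esub> a \<in> G" using car by auto
  have homeo: "\<And>a. a \<in> G \<Longrightarrow> continuous_on S1 a \<and> a ` S1 = S1 \<and> (\<forall>x. x \<notin> S1 \<longrightarrow> a x = x)"
    using GH unfolding Homeo_S1_def homeomorphism_def by blast
  define F where "F g = {x\<in>S1. g x = x}" for g :: "complex \<Rightarrow> complex"
  obtain g where gG: "g \<in> G" and gid: "g \<noteq> id" and
     Ane: "(top_of_set S1) interior_of F g \<noteq> {}"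
    using assms(3) unfolding topologically_free_def F_def by blast
  define A where "A = (top_of_set S1) interior_of F g"
  have Aopen: "openin (top_of_set S1) A" unfolding A_def by simp
  have AF: "A \<subseteq> F g" unfolding A_def by (rule interior_of_subset)
  obtain z0 where z0: "z0 \<in> S1" "g z0 \<noteq> z0"
    using gid homeo[OF gG] by (metis eq_id_iff)
  have AS: "A \<noteq> S1" using AF z0 F_def by auto
  have "\<not> closedin (top_of_set S1) A"
    using S1_conn Aopen AS Ane[folded A_def] unfolding connected_space_clopen_in by auto
  then have "(top_of_set S1) closure_of A \<noteq> A" by (metis closedin_closure_of)
  moreover have "A \<subseteq> (top_of_set S1) closure_of A"
    by (rule closure_of_subset) (use openin_subset[OF Aopen] in simp)
  ultimately obtain p where pcl: "p \<in> (top_of_set S1) closure_of A" and pA: "p \<notin> A"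
    by auto
  have pS: "p \<in> S1" using pcl closure_of_subset_topspace by fastforce
  obtain \<omega> where om: "\<omega> \<in> \<Omega>" "\<phi> g \<omega> \<noteq> \<omega>"
  proof -
    have "\<phi> g \<noteq> \<phi> \<one>\<^bsub>?H\<^esub>"
      using fa.faithful gG car one gid by (metis inj_on_eq_iff one_closed)
    then have "\<phi> g \<noteq> (\<lambda>x\<in>\<Omega>. x)" using fa.id_eq_one by simp
    moreover have "\<phi> g \<in> extensional \<Omega>" using fa.bij_prop0 gG car by (auto simp: Bij_def)
    ultimately show ?thesis using that by (force simp: extensional_def)
  qed
  define \<Delta> where "\<Delta> = {\<omega>, \<phi> g \<omega>}"
  have gom: "\<phi> g \<omega> \<in> \<Omega>" using fa.element_image gG car om by auto
  have "minimal_action (pointwise_stabilizer ?H \<phi> \<Delta>)"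
    using assms(5)[of \<Delta>] om gom unfolding \<Delta>_def by auto
  then have "S1 \<subseteq> closure {h p | h. h \<in> pointwise_stabilizer ?H \<phi> \<Delta>}"
    using pS unfolding minimal_action_def by blast
  obtain a where aA: "a \<in> A" using Ane A_def by blast
  obtain T where T: "open T" "A = T \<inter> S1" using Aopen by (auto simp: openin_open)
  obtain h where hst: "h \<in> pointwise_stabilizer ?H \<phi> \<Delta>" and hpA: "h p \<in> A"
  proof -
    have "a \<in> closure {h p | h. h \<in> pointwise_stabilizer ?H \<phi> \<Delta>}"
      using aA T \<open>S1 \<subseteq> closure _\<close> by blast
    then have "T \<inter> {h p | h. h \<in> pointwise_stabilizer ?H \<phi> \<Delta>} \<noteq> {}"
      using T(1) aA T(2) open_Int_closure_eq_empty by blast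
    then obtain h where h: "h \<in> pointwise_stabilizer ?H \<phi> \<Delta>" "h p \<in> T" by blast
    have "h \<in> G" using h(1) car by (simp add: pointwise_stabilizer_def)
    then have "h p \<in> S1" using homeo pS by blast
    then show ?thesis using that h T(2) by blast
  qed
  have hG: "h \<in> G" and hom: "\<phi> h \<omega> = \<omega>" and hgom: "\<phi> h (\<phi> g \<omega>) = \<phi> g \<omega>"
    using hst car by (auto simp: pointwise_stabilizer_def \<Delta>_def)
  define W where "W = S1 \<inter> h -` A"
  have Wopen: "openin (top_of_set S1) W"
    unfolding W_def using homeo[OF hG] by (intro continuous_openin_preimage[OF _ _ Aopen]) auto
  have pW: "p \<in> W" using pS hpA W_def by simp
  obtain a1 where a1: "a1 \<in> W" "a1 \<in> A"
    using pcl pW Wopen unfolding in_closure_of by blast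
  obtain z where z: "z \<in> W" "z \<notin> F g"
  proof (rule ccontr)
    assume "\<not> thesis"
    then have "W \<subseteq> F g" using that by blast
    then have "W \<subseteq> A" unfolding A_def using Wopen by (rule interior_of_maximal)
    then show False using pW pA by blast
  qed
  define ig where "ig = inv\<^bsub>?H\<^esub> g"
  define ih where "ih = inv\<^bsub>?H\<^esub> h"
  have igG: "ig \<in> G" and ihG: "ih \<in> G" using invG gG hG ig_def ih_def by auto
  define c where "c = ig \<otimes>\<^bsub>?H\<^esub> (ih \<otimes>\<^bsub>?H\<^esub> (g \<otimes>\<^bsub>?H\<^esub> h))"
  have cG: "c \<in> G" unfolding c_def using igG ihG gG hG car by (metis m_closed)
  have capp: "\<And>x. c x = ig (ih (g (h x)))" unfolding c_def mul by simp
  have "\<phi> c \<omega> = \<omega>"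
  proof -
    have gh: "g \<otimes>\<^bsub>?H\<^esub> h \<in> carrier ?H" using gG hG car by (metis m_closed)
    have ihgh: "ih \<otimes>\<^bsub>?H\<^esub> (g \<otimes>\<^bsub>?H\<^esub> h) \<in> carrier ?H" using ihG gh car by (metis m_closed)
    have e1: "\<phi> (g \<otimes>\<^bsub>?H\<^esub> h) \<omega> = \<phi> g (\<phi> h \<omega>)"
      by (rule fa.composition_rule) (use om gG hG car in auto)
    have e2: "\<phi> (ih \<otimes>\<^bsub>?H\<^esub> (g \<otimes>\<^bsub>?H\<^esub> h)) \<omega> = \<phi> ih (\<phi> (g \<otimes>\<^bsub>?H\<^esub> h) \<omega>)"
      by (rule fa.composition_rule) (use om ihG gh car in auto)
    have e3: "\<phi> c \<omega> = \<phi> ig (\<phi> (ih \<otimes>\<^bsub>?H\<^esub> (g \<otimes>\<^bsub>?H\<^esub> h)) \<omega>)"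
      unfolding c_def by (rule fa.composition_rule) (use om igG ihgh car in auto)
    have "\<phi> c \<omega> = \<phi> ig (\<phi> ih (\<phi> g (\<phi> h \<omega>)))"
      using e1 e2 e3 by simp
    also have "\<dots> = \<phi> ig (\<phi> ih (\<phi> g \<omega>))" using hom by simp
    also have "\<phi> ih (\<phi> g \<omega>) = \<phi> g \<omega>"
      unfolding ih_def using fa.orbit_sym_aux[OF _ gom hgom] hG car by simp
    also have "\<phi> ig (\<phi> g \<omega>) = \<omega>"
      unfolding ig_def using fa.orbit_sym_aux[OF _ om(1) refl] gG car by simp
    finally show ?thesis .
  qed
  then have cst: "c \<in> stabilizer ?H \<phi> \<omega>" using cG car by (simp add: stabilizer_def)
  have hzA: "h z \<in> A" using z W_def by simp
  have "c z = ig z"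
    using capp hzA AF F_def invl[OF hG] ih_def by auto
  moreover have "ig z \<noteq> z" using z invr[OF gG] ig_def W_def F_def by (metis (mono_tags, lifting) IntD1 mem_Collect_eq)
  ultimately have cid: "c \<noteq> id" by auto
  have "W \<inter> A \<subseteq> F c"
  proof
    fix x assume x: "x \<in> W \<inter> A"
    then have "h x \<in> A" using W_def by simp
    then have "g (h x) = h x" using AF F_def by auto
    moreover have "g x = x" "x \<in> S1" using x AF F_def by auto
    ultimately have "c x = x" using capp invl[OF hG] invl[OF gG] ih_def ig_def by metis
    then show "x \<in> F c" using \<open>x \<in> S1\<close> F_def by simp
  qed
  then have "W \<inter> A \<subseteq> (top_of_set S1) interior_of F c"
    using Wopen Aopen by (intro interior_of_maximal) auto
  then have "(top_of_set S1) interior_of F c \<noteq> {}" using a1 by blast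
  then have "\<not> topologically_free (stabilizer ?H \<phi> \<omega>)"
    using cst cid unfolding topologically_free_def F_def by blast
  then show ?thesis using om by blast
qed
end
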